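(* Let $\mathbf{V}\in\mathbb{R}^{n\times(k+1)}$ have full column rank and let $e_1>0$ be the smallest eigenvalue of $\mathbf{V}^\top\mathbf{V}$. Suppose $\mathbf{W}\in\mathbb{R}^{k\times(k+1)}$ satisfies $$\max_{i\in[n]}\Big\{\min_{l\in[k]}\|\mathbf{V}_{i,:}-\mathbf{W}_{l,:}\|\Big\}=\epsilon.$$ Then $\epsilon\ge\sqrt{e_1}\,(3n(k+1)^2)^{-1}$.
   Context: $[n]=\{1,\dots,n\}$; $\|\cdot\|$ is the Euclidean norm; $\mathbf{V}_{i,:}$ denotes the $i$-th row of $\mathbf{V}$. *)

theory Defs
  imports "HOL-Analysis.Analysis"
begin

definition is_eigenvalue :: "real^'m^'m \<Rightarrow> real \<Rightarrow> bool" where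
  "is_eigenvalue A mu \<longleftrightarrow> (\<exists>v. v \<noteq> 0 \<and> A *v v = mu *\<^sub>R v)"

definition is_smallest_eigenvalue :: "real^'m^'m \<Rightarrow> real \<Rightarrow> bool" where
  "is_smallest_eigenvalue A e \<longleftrightarrow>
     is_eigenvalue A e \<and> (\<forall>mu. is_eigenvalue A mu \<longrightarrow> e \<le> mu)"

end

theory Submission
  imports Defs
begin

lemma vt_inner:
  fixes V :: "real^'c^'n"
  shows "inner (V *v x) (V *v y) = inner x (transpose V *v (V *v y))"
  by (metis dot_lmul_matrix vector_transpose_matrix)

lemma rayleigh:
  fixes V :: "real^'c^'n"
  assumes "is_smallest_eigenvalue (transpose V ** V) e1"
  shows "e1 * (norm x)^2 \<le> (norm (V *v x))^2"
proof -
  have "continuous_on (sphere (0::real^'c) 1) (\<lambda>x. (norm (V *v x))^2)"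
    by (intro continuous_intros)
  then obtain u where u: "u \<in> sphere 0 1" and umin: "\<And>y. y \<in> sphere 0 1 \<Longrightarrow> (norm (V *v u))^2 \<le> (norm (V *v y))^2"
    using continuous_attains_inf[of "sphere (0::real^'c) 1"] by fastforce
  define m where "m = (norm (V *v u))^2"
  have nu: "norm u = 1" using u by simp
  have ge: "m * (norm x)^2 \<le> (norm (V *v x))^2" for x
  proof (cases "x = 0")
    case True then show ?thesis by simp
  next
    case False
    let ?y = "(1 / norm x) *\<^sub>R x"
    have "?y \<in> sphere 0 1" using False by simp
    then have "m \<le> (norm (V *v ?y))^2" using umin m_def by blast
    also have "\<dots> = (norm (V *v x))^2 / (norm x)^2"
      by (simp add: matrix_vector_mult_scaleR power_divide)
    finally show ?thesis using False by (simp add: field_simps)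
  qed
  define Bu where "Bu = transpose V *v (V *v u) - m *\<^sub>R u"
  have a0: "inner y Bu = 0" for y
  proof (rule ccontr)
    assume ne: "inner y Bu \<noteq> 0"
    define a where "a = inner y Bu"
    define b where "b = (norm (V *v y))^2 - m * (norm y)^2"
    have b0: "b \<ge> 0" using ge[of y] b_def by simp
    have key: "(norm (V *v (u + t *\<^sub>R y)))^2 - m * (norm (u + t *\<^sub>R y))^2 = 2 * t * a + t^2 * b" for t
    proof -
      have "(norm (V *v (u + t *\<^sub>R y)))^2 = inner (V *v u + t *\<^sub>R (V *v y)) (V *v u + t *\<^sub>R (V *v y))"
        by (simp add: matrix_vector_right_distrib matrix_vector_mult_scaleR power2_norm_eq_inner)
      also have "\<dots> = (norm (V *v u))^2 + 2 * t * inner (V *v y) (V *v u) + t^2 * (norm (V *v y))^2"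
        unfolding power2_norm_eq_inner by (simp add: inner_add_left inner_add_right power2_norm_eq_inner inner_commute power2_eq_square algebra_simps)
      finally have 1: "(norm (V *v (u + t *\<^sub>R y)))^2 = m + 2 * t * inner (V *v y) (V *v u) + t^2 * (norm (V *v y))^2"
        using m_def by simp
      have uu: "inner u u = 1" by (metis nu power2_norm_eq_inner one_power2)
      have 2: "(norm (u + t *\<^sub>R y))^2 = 1 + 2 * t * inner y u + t^2 * (norm y)^2"
        using uu unfolding power2_norm_eq_inner by (simp add: power2_norm_eq_inner inner_add_left inner_add_right inner_commute power2_eq_square algebra_simps)
      have 3: "a = inner (V *v y) (V *v u) - m * inner y u"
        unfolding a_def Bu_def by (simp add: vt_inner inner_diff_right)
      show ?thesis unfolding 1 2 3 b_def by (simp add: algebra_simps)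
    qed
    define t where "t = - a / (b + 1)"
    have "0 \<le> 2 * t * a + t^2 * b" using ge[of "u + t *\<^sub>R y"] key[of t] by simp
    moreover have "2 * t * a + t^2 * b < 0"
    proof -
      have bp: "b + 1 > 0" using b0 by simp
      have tb: "t * (b + 1) = - a" using bp by (simp add: t_def)
      have "t^2 * b \<le> t^2 * (b + 1)" by (rule mult_left_mono) simp_all
      moreover have "t^2 * (b + 1) = - (t * a)"
        by (metis tb mult.assoc power2_eq_square mult_minus_right)
      moreover have "t * a < 0"
      proof -
        have "a \<noteq> 0" using ne a_def by simp
        then have "a * a > 0" by (simp add: zero_less_mult_iff) linarith
        then have "- (a * a) / (b + 1) < 0" using bp by (simp add: divide_neg_pos)
        then show ?thesis by (simp add: t_def)
      qed
      ultimately show ?thesis by linarith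
    qed
    ultimately show False by simp
  qed
  have "Bu = 0" using a0[of Bu] by simp
  then have "(transpose V ** V) *v u = m *\<^sub>R u"
    unfolding Bu_def by (simp add: matrix_vector_mul_assoc[symmetric])
  moreover have "u \<noteq> 0" using nu by auto
  ultimately have "is_eigenvalue (transpose V ** V) m" unfolding is_eigenvalue_def by blast
  then have "e1 \<le> m" using assms unfolding is_smallest_eigenvalue_def by blast
  then have "e1 * (norm x)^2 \<le> m * (norm x)^2" by (rule mult_right_mono) simp
  then show ?thesis using ge[of x] by linarith
qed

theorem corollary8:
  fixes V :: "real^'c^'n" and W :: "real^'c^'k" and e1 eps :: real
  assumes "CARD('c) = CARD('k) + 1"
    and "rank V = CARD('c)"
    and "is_smallest_eigenvalue (transpose V ** V) e1"
    and "e1 > 0"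
    and "Max (range (\<lambda>i. Min (range (\<lambda>l. norm (V $ i - W $ l))))) = eps"
  shows "eps \<ge> sqrt e1 / (3 * real CARD('n) * (real CARD('k) + 1)^2)"
proof -
  have "dim (range (\<lambda>l. W $ l)) \<le> card (range (\<lambda>l. W $ l))"
    by (rule dim_le_card') simp
  also have "\<dots> \<le> CARD('k)" by (rule card_image_le) simp
  finally have dimlt: "dim (range (\<lambda>l. W $ l)) < DIM(real^'c)" using assms(1) by simp
  obtain u0 :: "real^'c" where u0: "u0 \<noteq> 0" and orth: "\<And>y. y \<in> span (range (\<lambda>l. W $ l)) \<Longrightarrow> orthogonal u0 y"
    using orthogonal_to_subspace_exists[OF dimlt] by blast
  define u where "u = (1 / norm u0) *\<^sub>R u0"
  have nu: "norm u = 1" using u0 u_def by simp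
  have uW: "inner u (W $ l) = 0" for l
  proof -
    have "W $ l \<in> span (range (\<lambda>l. W $ l))" by (rule span_base) simp
    then have "inner u0 (W $ l) = 0" using orth unfolding orthogonal_def by blast
    then show ?thesis unfolding u_def by simp
  qed
  have bnd: "\<bar>(V *v u) $ i\<bar> \<le> eps" for i
  proof -
    have "Min (range (\<lambda>l. norm (V $ i - W $ l))) \<in> range (\<lambda>l. norm (V $ i - W $ l))"
      by (rule Min_in) simp_all
    then obtain l where l0: "Min (range (\<lambda>l. norm (V $ i - W $ l))) = norm (V $ i - W $ l)"
      by (rule imageE)
    have l: "norm (V $ i - W $ l) = Min (range (\<lambda>l. norm (V $ i - W $ l)))" using l0 by (rule sym)
    define f where "f = (\<lambda>i. Min (range (\<lambda>l. norm (V $ i - W $ l))))"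
    have "f i \<le> Max (range f)" by (rule Max_ge) simp_all
    then have "Min (range (\<lambda>l. norm (V $ i - W $ l))) \<le> eps" unfolding f_def assms(5) .
    moreover have "(V *v u) $ i = inner (V $ i - W $ l) u"
    proof -
      have "(V *v u) $ i = inner (V $ i) u"
        by (simp add: matrix_vector_mult_def inner_vec_def mult.commute)
      moreover have "inner (W $ l) u = 0" using uW[of l] by (simp add: inner_commute)
      ultimately show ?thesis by (simp add: inner_diff_left)
    qed
    moreover have "\<bar>inner (V $ i - W $ l) u\<bar> \<le> norm (V $ i - W $ l)"
      using Cauchy_Schwarz_ineq2[of "V $ i - W $ l" u] nu by simp
    ultimately show ?thesis using l by linarith
  qed
  have eps0: "eps \<ge> 0" using bnd[of undefined] by simp
  have "e1 \<le> (norm (V *v u))^2" using rayleigh[OF assms(3), of u] nu by simp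
  also have "\<dots> = (\<Sum>i\<in>UNIV. ((V *v u) $ i)^2)"
    by (simp add: norm_vec_def L2_set_def sum_nonneg)
  also have "\<dots> \<le> (\<Sum>i\<in>(UNIV::'n set). eps^2)"
  proof (intro sum_mono)
    fix i
    show "((V *v u) $ i)^2 \<le> eps^2" using power_mono[OF bnd[of i] abs_ge_zero, of 2] by simp
  qed
  also have "\<dots> = real CARD('n) * eps^2" by simp
  finally have "e1 \<le> real CARD('n) * eps^2" .
  then have "sqrt e1 \<le> sqrt (real CARD('n) * eps^2)" by (rule real_sqrt_le_mono)
  also have "\<dots> = sqrt (real CARD('n)) * eps" using eps0 by (simp add: real_sqrt_mult)
  also have "\<dots> \<le> real CARD('n) * eps"
  proof (rule mult_right_mono[OF _ eps0])
    have n1: "real CARD('n) \<ge> 1" by simp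
    then have s1: "sqrt (real CARD('n)) \<ge> 1" by simp
    have "sqrt (real CARD('n)) * 1 \<le> sqrt (real CARD('n)) * sqrt (real CARD('n))"
      by (rule mult_left_mono) (use s1 in simp_all)
    then show "sqrt (real CARD('n)) \<le> real CARD('n)" by simp
  qed
  finally have s: "sqrt e1 \<le> real CARD('n) * eps" .
  have n1: "real CARD('n) \<ge> 1" by simp
  have d1: "3 * real CARD('n) * (real CARD('k) + 1)^2 \<ge> real CARD('n)"
  proof -
    have "(real CARD('k) + 1)^2 \<ge> 1" by simp
    then have "3 * (real CARD('k) + 1)^2 \<ge> 1" by linarith
    then have "real CARD('n) * 1 \<le> real CARD('n) * (3 * (real CARD('k) + 1)^2)" by (rule mult_left_mono) simp
    then show ?thesis by (simp add: mult.assoc mult.left_commute)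
  qed
  have "sqrt e1 / (3 * real CARD('n) * (real CARD('k) + 1)^2) \<le> sqrt e1 / real CARD('n)"
    using d1 n1 assms(4) by (intro divide_left_mono) auto
  also have "\<dots> \<le> eps" using s n1 by (simp add: field_simps)
  finally show ?thesis .
qed

end
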